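(* Suppose $1/n\ll\varepsilon_3\ll\varepsilon_4\ll\eta_2\ll1$. Let $G$ be a digraph on $n$ vertices with $\delta^0(G)\geq n/2$ and let $A,B,S,T$ be a partition of $V(G)$ satisfying the $ST$-conditions, with sizes $a,b,s,t$. Then: (i) if $a=b\in\{0,1\}$, then for any choice of $(X_1,Y_1),(X_2,Y_2)\in\{(S,T),(T,S)\}$ there are two vertex-disjoint edges $e_1\in E(X_1,Y_1)$ and $e_2\in E(X_2,Y_2)$; (ii) if $A=\emptyset$, then there are two vertex-disjoint edges in $E(T,S)$; (iii) if $a=1$ and $b\geq 2$, then there are two vertex-disjoint edges in $E(T,S)$; (iv) there are two vertex-disjoint edges in $E(S,T\cup A)\cup E(T,S\cup B)$.
   Context: Digraphs have no loops and at most one edge in each direction between two vertices; $\delta^0$ is the minimum semidegree; $E(X,Y)$ is the set of edges $xy$ with $x\in X$, $y\in Y$; $d^+_X(x)=|N^+(x)\cap X|$, $d^-_X(x)=|N^-(x)\cap X|$, and $d^\pm_X(x)\geq c$ means both are $\geq c$; $G[X]$ is the induced subdigraph. The $ST$-conditions on a partition $A,B,S,T$ of sizes $a,b,s,t$: $a\leq b$, $s\leq t$; $\lfloor n/2\rfloor-\varepsilon_3n\leq s,t\leq\lceil n/2\rceil+\varepsilon_3 n$; $\delta^0(G[S]),\delta^0(G[T])\geq\eta_2 n$; $d^\pm_S(x)\geq n/2-\varepsilon_3n$ for all but at most $\varepsilon_3 n$ vertices $x\in S$; $d^\pm_T(x)\geq n/2-\varepsilon_3n$ for all but at most $\varepsilon_3n$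 vertices $x\in T$; $a+b\leq\varepsilon_3 n$; for all $x\in A$: $d^-_T(x),d^+_S(x)>n/2-3\eta_2n$ and $d^-_S(x),d^+_T(x)\leq 3\eta_2 n$; for all $x\in B$: $d^-_S(x),d^+_T(x)>n/2-3\eta_2 n$ and $d^-_T(x),d^+_S(x)\leq 3\eta_2 n$. The hierarchy $\alpha\ll\beta$ means $\alpha$ is sufficiently small as a function of $\beta$. *)

theory Defs
  imports Complex_Main
begin

text \<open>A digraph is a finite vertex set V with an edge set E \<subseteq> V \<times> V without loops.
  (Using a set of ordered pairs gives at most one edge in each direction.)\<close>

definition digraph :: "'a set \<Rightarrow> ('a \<times> 'a) set \<Rightarrow> bool" where
  "digraph V E \<longleftrightarrow> finite V \<and> E \<subseteq> V \<times> V \<and> (\<forall>x. (x, x) \<notin> E)"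

definition dout :: "('a \<times> 'a) set \<Rightarrow> 'a set \<Rightarrow> 'a \<Rightarrow> nat" where
  "dout E X x = card {y \<in> X. (x, y) \<in> E}"

definition din :: "('a \<times> 'a) set \<Rightarrow> 'a set \<Rightarrow> 'a \<Rightarrow> nat" where
  "din E X x = card {y \<in> X. (y, x) \<in> E}"

definition min_semideg :: "('a \<times> 'a) set \<Rightarrow> 'a set \<Rightarrow> nat" where
  "min_semideg E X = Min ((\<lambda>x. dout E X x) ` X \<union> (\<lambda>x. din E X x) ` X)"

definition edges_between :: "('a \<times> 'a) set \<Rightarrow> 'a set \<Rightarrow> 'a set \<Rightarrow> ('a \<times> 'a) set" where
  "edges_between E X Y = {e \<in> E. fst e \<in> X \<and> snd e \<in> Y}"

definition vdisjoint :: "('a \<times> 'a) \<Rightarrow> ('a \<times> 'a) \<Rightarrow> bool" where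
  "vdisjoint e1 e2 \<longleftrightarrow> {fst e1, snd e1} \<inter> {fst e2, snd e2} = {}"

definition ST_conditions ::
  "real \<Rightarrow> real \<Rightarrow> 'a set \<Rightarrow> ('a \<times> 'a) set \<Rightarrow> 'a set \<Rightarrow> 'a set \<Rightarrow> 'a set \<Rightarrow> 'a set \<Rightarrow> bool" where
  "ST_conditions eps3 eta2 V E A B S T \<longleftrightarrow>
    (let n = real (card V) in
     A \<union> B \<union> S \<union> T = V \<and>
     A \<inter> B = {} \<and> A \<inter> S = {} \<and> A \<inter> T = {} \<and> B \<inter> S = {} \<and> B \<inter> T = {} \<and> S \<inter> T = {} \<and>
     card A \<le> card B \<and> card S \<le> card T \<and>
     real_of_int \<lfloor>n / 2\<rfloor> - eps3 * n \<le> card S \<and> real (card S) \<le> real_of_int \<lceil>n / 2\<rceil> + eps3 * n \<and>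
     real_of_int \<lfloor>n / 2\<rfloor> - eps3 * n \<le> card T \<and> real (card T) \<le> real_of_int \<lceil>n / 2\<rceil> + eps3 * n \<and>
     real (min_semideg E S) \<ge> eta2 * n \<and> real (min_semideg E T) \<ge> eta2 * n \<and>
     real (card {x \<in> S. \<not> (real (dout E S x) \<ge> n/2 - eps3 * n \<and> real (din E S x) \<ge> n/2 - eps3 * n)}) \<le> eps3 * n \<and>
     real (card {x \<in> T. \<not> (real (dout E T x) \<ge> n/2 - eps3 * n \<and> real (din E T x) \<ge> n/2 - eps3 * n)}) \<le> eps3 * n \<and>
     real (card A + card B) \<le> eps3 * n \<and>
     (\<forall>x \<in> A. real (din E T x) > n/2 - 3 * eta2 * n \<and> real (dout E S x) > n/2 - 3 * eta2 * n \<and>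
               real (din E S x) \<le> 3 * eta2 * n \<and> real (dout E T x) \<le> 3 * eta2 * n) \<and>
     (\<forall>x \<in> B. real (din E S x) > n/2 - 3 * eta2 * n \<and> real (dout E T x) > n/2 - 3 * eta2 * n \<and>
               real (din E T x) \<le> 3 * eta2 * n \<and> real (dout E S x) \<le> 3 * eta2 * n))"

end

theory Submission
  imports Defs
begin


lemma exists_outside:
  assumes "card W < card A" "finite W"
  shows "\<exists>a\<in>A. a \<notin> W"
proof (rule ccontr)
  assume "\<not> ?thesis"
  then have "A \<subseteq> W" by blast
  then have "card A \<le> card W" using assms(2) by (simp add: card_mono)
  then show False using assms(1) by simp
qed

lemma exists_ne1:
  assumes "card A \<ge> 2" shows "\<exists>a\<in>A. a \<noteq> w"
  using exists_outside[of "{w}" A] assms by auto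

lemma exists_ne2:
  assumes "card A \<ge> 3" shows "\<exists>a\<in>A. a \<noteq> w1 \<and> a \<noteq> w2"
proof -
  have "card {w1, w2} \<le> 2" by (simp add: card_insert_le_m1)
  then show ?thesis using exists_outside[of "{w1,w2}" A] assms by auto
qed

lemma card_pos_ex: "card A \<ge> 1 \<Longrightarrow> \<exists>a. a \<in> A"
  by (metis card.empty ex_in_conv not_one_le_zero)

lemma vdisj_iff: "vdisjoint (a,b) (c,d) \<longleftrightarrow> a \<noteq> c \<and> a \<noteq> d \<and> b \<noteq> c \<and> b \<noteq> d"
  unfolding vdisjoint_def by auto

lemma eb_iff: "(x,y) \<in> edges_between E X Y \<longleftrightarrow> (x,y) \<in> E \<and> x \<in> X \<and> y \<in> Y"
  unfolding edges_between_def by auto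

lemma dout_split:
  assumes "finite X" "finite Y" "V \<subseteq> X \<union> Y"
  shows "dout E V x \<le> dout E X x + dout E Y x"
proof -
  have "{y\<in>V. (x,y)\<in>E} \<subseteq> {y\<in>X. (x,y)\<in>E} \<union> {y\<in>Y. (x,y)\<in>E}" using assms(3) by blast
  then have "card {y\<in>V. (x,y)\<in>E} \<le> card ({y\<in>X. (x,y)\<in>E} \<union> {y\<in>Y. (x,y)\<in>E})"
    using assms by (intro card_mono) auto
  also have "\<dots> \<le> card {y\<in>X. (x,y)\<in>E} + card {y\<in>Y. (x,y)\<in>E}" by (rule card_Un_le)
  finally show ?thesis unfolding dout_def .
qed

lemma din_split:
  assumes "finite X" "finite Y" "V \<subseteq> X \<union> Y"
  shows "din E V x \<le> din E X x + din E Y x"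
proof -
  have "{y\<in>V. (y,x)\<in>E} \<subseteq> {y\<in>X. (y,x)\<in>E} \<union> {y\<in>Y. (y,x)\<in>E}" using assms(3) by blast
  then have "card {y\<in>V. (y,x)\<in>E} \<le> card ({y\<in>X. (y,x)\<in>E} \<union> {y\<in>Y. (y,x)\<in>E})"
    using assms by (intro card_mono) auto
  also have "\<dots> \<le> card {y\<in>X. (y,x)\<in>E} + card {y\<in>Y. (y,x)\<in>E}" by (rule card_Un_le)
  finally show ?thesis unfolding din_def .
qed

lemma dout_le: "finite X \<Longrightarrow> dout E X x \<le> card X"
  unfolding dout_def by (rule card_mono) auto
lemma din_le: "finite X \<Longrightarrow> din E X x \<le> card X"
  unfolding din_def by (rule card_mono) auto

lemma dout_self: assumes "finite X" "x \<in> X" "(x,x) \<notin> E" shows "dout E X x + 1 \<le> card X"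
proof -
  have "{y\<in>X. (x,y)\<in>E} \<subseteq> X - {x}" using assms by auto
  then have "dout E X x \<le> card (X - {x})" unfolding dout_def using assms by (intro card_mono) auto
  moreover have "card (X - {x}) = card X - 1" using assms by (simp add: card_Diff_singleton)
  moreover have "card X > 0" using assms card_gt_0_iff by blast
  ultimately show ?thesis by linarith
qed
lemma din_self: assumes "finite X" "x \<in> X" "(x,x) \<notin> E" shows "din E X x + 1 \<le> card X"
proof -
  have "{y\<in>X. (y,x)\<in>E} \<subseteq> X - {x}" using assms by auto
  then have "din E X x \<le> card (X - {x})" unfolding din_def using assms by (intro card_mono) auto
  moreover have "card (X - {x}) = card X - 1" using assms by (simp add: card_Diff_singleton)
  moreover have "card X > 0" using assms card_gt_0_iff by blast
  ultimately show ?thesis by linarith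
qed


lemma markov:
  assumes "finite S" shows "card {x\<in>S. c \<le> f x} * c \<le> sum f S"
proof -
  have "card {x\<in>S. c \<le> f x} * c = (\<Sum>x\<in>{x\<in>S. c \<le> f x}. c)" by simp
  also have "\<dots> \<le> (\<Sum>x\<in>{x\<in>S. c \<le> f x}. f x)" by (rule sum_mono) auto
  also have "\<dots> \<le> sum f S" using assms by (intro sum_mono2) auto
  finally show ?thesis .
qed

lemma card_filter_sum: "finite P \<Longrightarrow> card {y\<in>P. R y} = (\<Sum>y\<in>P. if R y then 1 else (0::nat))"
  by (simp add: sum.If_cases Int_def)

lemma double_count:
  assumes "finite P" "finite Q"
  shows "(\<Sum>x\<in>Q. din E P x) = (\<Sum>y\<in>P. dout E Q y)"
  unfolding din_def dout_def using assms
  by (simp add: card_filter_sum sum.swap[of _ Q P])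

lemma sum_le_real:
  assumes "finite A" "\<forall>x\<in>A. real (f x) \<le> c"
  shows "real (sum f A) \<le> real (card A) * c"
proof -
  have "real (sum f A) = (\<Sum>x\<in>A. real (f x))" by simp
  also have "\<dots> \<le> (\<Sum>x\<in>A. c)" using assms(2) by (intro sum_mono) auto
  finally show ?thesis by simp
qed

lemma deg_V:
  assumes "digraph V E" "real (card V) / 2 \<le> real (min_semideg E V)" "x \<in> V"
  shows "real (card V) / 2 \<le> real (dout E V x)" "real (card V) / 2 \<le> real (din E V x)"
proof -
  have f: "finite V" using assms(1) unfolding digraph_def by simp
  have "min_semideg E V \<le> dout E V x" unfolding min_semideg_def
    using f assms(3) by (intro Min_le) auto
  then show "real (card V) / 2 \<le> real (dout E V x)" using assms(2) by linarith
  have "min_semideg E V \<le> din E V x" unfolding min_semideg_def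
    using f assms(3) by (intro Min_le) auto
  then show "real (card V) / 2 \<le> real (din E V x)" using assms(2) by linarith
qed


lemma outL:
  assumes "X \<inter> Y = {}" "u1 \<in> X" "u2 \<in> X" "u1 \<noteq> u2" "(u1,w) \<in> E" "w \<in> Y"
    "card {y\<in>Y. (u2,y)\<in>E} \<ge> 2"
  shows "\<exists>e1\<in>edges_between E X Y. \<exists>e2\<in>edges_between E X Y. vdisjoint e1 e2"
proof -
  obtain w2 where "w2 \<in> {y\<in>Y. (u2,y)\<in>E}" "w2 \<noteq> w" using exists_ne1[OF assms(7)] by blast
  then have "(u1,w) \<in> edges_between E X Y" "(u2,w2) \<in> edges_between E X Y" "vdisjoint (u1,w) (u2,w2)"
    using assms by (auto simp: eb_iff vdisj_iff)
  then show ?thesis by blast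
qed

lemma inL:
  assumes "X \<inter> Y = {}" "v1 \<in> Y" "v2 \<in> Y" "v1 \<noteq> v2" "(w,v1) \<in> E" "w \<in> X"
    "card {x\<in>X. (x,v2)\<in>E} \<ge> 2"
  shows "\<exists>e1\<in>edges_between E X Y. \<exists>e2\<in>edges_between E X Y. vdisjoint e1 e2"
proof -
  obtain w2 where "w2 \<in> {x\<in>X. (x,v2)\<in>E}" "w2 \<noteq> w" using exists_ne1[OF assms(7)] by blast
  then have "(w,v1) \<in> edges_between E X Y" "(w2,v2) \<in> edges_between E X Y" "vdisjoint (w,v1) (w2,v2)"
    using assms by (auto simp: eb_iff vdisj_iff)
  then show ?thesis by blast
qed

lemma M1:
  assumes "X \<inter> Y = {}" "x1 \<in> X" "x2 \<in> X" "x1 \<noteq> x2" "(x1,y1) \<in> E" "y1 \<in> Y"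
    "card {y\<in>Y. (y,x2)\<in>E} \<ge> 2"
  shows "\<exists>e1\<in>edges_between E X Y. \<exists>e2\<in>edges_between E Y X. vdisjoint e1 e2"
proof -
  obtain y2 where "y2 \<in> {y\<in>Y. (y,x2)\<in>E}" "y2 \<noteq> y1" using exists_ne1[OF assms(7)] by blast
  then have "(x1,y1) \<in> edges_between E X Y" "(y2,x2) \<in> edges_between E Y X" "vdisjoint (x1,y1) (y2,x2)"
    using assms by (auto simp: eb_iff vdisj_iff)
  then show ?thesis by blast
qed

lemma M2:
  assumes "X \<inter> Y = {}" "X' \<subseteq> X" "Y' \<subseteq> Y" "card X' \<ge> 2" "card Y' \<ge> 3"
    "\<forall>x\<in>X'. \<exists>y\<in>Y. (x,y) \<in> E" "\<forall>y\<in>Y'. \<exists>x\<in>X. (y,x) \<in> E"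
  shows "\<exists>e1\<in>edges_between E X Y. \<exists>e2\<in>edges_between E Y X. vdisjoint e1 e2"
proof (cases "\<exists>x1\<in>X. \<exists>y1\<in>Y. \<exists>y\<in>Y. \<exists>x\<in>X. (x1,y1) \<in> E \<and> (y,x) \<in> E \<and> x \<noteq> x1 \<and> y \<noteq> y1")
  case True
  then obtain x1 y1 y x where h: "x1\<in>X" "y1\<in>Y" "y\<in>Y" "x\<in>X" "(x1,y1) \<in> E" "(y,x) \<in> E" "x \<noteq> x1" "y \<noteq> y1"
    by blast
  then have "(x1,y1) \<in> edges_between E X Y" "(y,x) \<in> edges_between E Y X" "vdisjoint (x1,y1) (y,x)"
    using assms(1) by (auto simp: eb_iff vdisj_iff)
  then show ?thesis by blast
next
  case False
  have "card X' \<ge> 1" using assms(4) by simp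
  then obtain x1 where x1: "x1 \<in> X'" using card_pos_ex by blast
  then obtain y1 where y1: "y1 \<in> Y" "(x1,y1) \<in> E" using assms(6) by blast
  obtain x2 where x2: "x2 \<in> X'" "x2 \<noteq> x1" using exists_ne1[OF assms(4)] by blast
  then obtain y' where y': "y' \<in> Y" "(x2,y') \<in> E" using assms(6) by blast
  obtain y2 where y2: "y2 \<in> Y'" "y2 \<noteq> y1" "y2 \<noteq> y'" using exists_ne2[OF assms(5)] by blast
  then obtain x where x: "x \<in> X" "(y2,x) \<in> E" using assms(7) by blast
  have "x = x1" using False x y2 y1 x1 assms(2,3) by blast
  then have "(x2,y') \<in> edges_between E X Y" "(y2,x1) \<in> edges_between E Y X" "vdisjoint (x2,y') (y2,x1)"
    using assms(1,2,3) x y2 y' x2 x1 by (auto simp: eb_iff vdisj_iff)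
  then show ?thesis by blast
qed

lemma bip:
  assumes "X \<inter> Y = {}" "U \<subseteq> X" "W \<subseteq> Y" "card U \<ge> 2" "card W \<ge> 2"
    "\<forall>u\<in>U. \<exists>y\<in>Y. (u,y) \<in> E" "\<forall>v\<in>W. \<exists>x\<in>X. (x,v) \<in> E"
  shows "\<exists>e1\<in>edges_between E X Y. \<exists>e2\<in>edges_between E X Y. vdisjoint e1 e2"
proof -
  have "card U \<ge> 1" using assms(4) by simp
  then obtain u1 where u1: "u1 \<in> U" using card_pos_ex by blast
  then obtain w1 where w1: "w1 \<in> Y" "(u1,w1) \<in> E" using assms(6) by blast
  show ?thesis
  proof (cases "\<exists>x\<in>X. \<exists>y\<in>Y. (x,y) \<in> E \<and> x \<noteq> u1 \<and> y \<noteq> w1")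
    case True
    then obtain x y where h: "x\<in>X" "y\<in>Y" "(x,y) \<in> E" "x \<noteq> u1" "y \<noteq> w1" by blast
    then have "(u1,w1) \<in> edges_between E X Y" "(x,y) \<in> edges_between E X Y" "vdisjoint (u1,w1) (x,y)"
      using assms(1,2) u1 w1 by (auto simp: eb_iff vdisj_iff)
    then show ?thesis by blast
  next
    case False
    obtain u2 where u2: "u2 \<in> U" "u2 \<noteq> u1" using exists_ne1[OF assms(4)] by blast
    then obtain w2 where w2: "w2 \<in> Y" "(u2,w2) \<in> E" using assms(6) by blast
    have "w2 = w1" using False u2 w2 assms(2) by blast
    obtain v where v: "v \<in> W" "v \<noteq> w1" using exists_ne1[OF assms(5)] by blast
    then obtain x where x: "x \<in> X" "(x,v) \<in> E" using assms(7) by blast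
    have "x = u1" using False x v assms(3) by blast
    then have "(u2,w1) \<in> edges_between E X Y" "(u1,v) \<in> edges_between E X Y" "vdisjoint (u2,w1) (u1,v)"
      using assms(1,2,3) x v u2 u1 w2 \<open>w2 = w1\<close> by (auto simp: eb_iff vdisj_iff)
    then show ?thesis by blast
  qed
qed

lemma part4_lem:
  assumes "S \<inter> P = {}" "T \<inter> Q = {}" "P \<inter> Q = {}" "S \<inter> T = {}" "T \<subseteq> P" "S \<subseteq> Q"
    "card S \<ge> 2" "card T \<ge> 2"
    "(\<forall>x\<in>S. dout E P x \<ge> 2) \<or> (\<forall>y\<in>T. dout E Q y \<ge> 2) \<or> ((\<forall>x\<in>S. dout E P x \<ge> 1) \<and> (\<forall>y\<in>T. dout E Q y \<ge> 1))"
  shows "\<exists>e1\<in>edges_between E S P \<union> edges_between E T Q. \<exists>e2\<in>edges_between E S P \<union> edges_between E T Q. vdisjoint e1 e2"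
proof -
  have cS: "card S \<ge> 1" "card T \<ge> 1" using assms(7,8) by auto
  consider "\<forall>x\<in>S. dout E P x \<ge> 2" | "\<forall>y\<in>T. dout E Q y \<ge> 2"
    | "(\<forall>x\<in>S. dout E P x \<ge> 1) \<and> (\<forall>y\<in>T. dout E Q y \<ge> 1)" using assms(9) by blast
  then show ?thesis
  proof cases
    case 1
    obtain x1 where x1: "x1 \<in> S" using card_pos_ex[OF cS(1)] card_pos_ex[OF cS(2)] by blast
    obtain x2 where x2: "x2 \<in> S" "x2 \<noteq> x1" using exists_ne1[OF assms(7)] by blast
    have "dout E P x1 \<ge> 2" using 1 x1 by blast
    then have "card {y\<in>P. (x1,y)\<in>E} \<ge> 1" unfolding dout_def by simp
    then obtain y1 where y1: "y1 \<in> {y\<in>P. (x1,y)\<in>E}" using card_pos_ex by blast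
    have "card {y\<in>P. (x2,y)\<in>E} \<ge> 2" using 1 x2 unfolding dout_def by blast
    note c2 = this
    obtain y2 where y2: "y2 \<in> {y\<in>P. (x2,y)\<in>E}" "y2 \<noteq> y1" using exists_ne1[OF c2] by blast
    have "(x1,y1) \<in> edges_between E S P" "(x2,y2) \<in> edges_between E S P" "vdisjoint (x1,y1) (x2,y2)"
      using x1 x2 y1 y2 assms(1) by (auto simp: eb_iff vdisj_iff)
    then show ?thesis by blast
  next
    case 2
    obtain x1 where x1: "x1 \<in> T" using card_pos_ex[OF cS(1)] card_pos_ex[OF cS(2)] by blast
    obtain x2 where x2: "x2 \<in> T" "x2 \<noteq> x1" using exists_ne1[OF assms(8)] by blast
    have "dout E Q x1 \<ge> 2" using 2 x1 by blast
    then have "card {y\<in>Q. (x1,y)\<in>E} \<ge> 1" unfolding dout_def by simp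
    then obtain y1 where y1: "y1 \<in> {y\<in>Q. (x1,y)\<in>E}" using card_pos_ex by blast
    have "card {y\<in>Q. (x2,y)\<in>E} \<ge> 2" using 2 x2 unfolding dout_def by blast
    note c2 = this
    obtain y2 where y2: "y2 \<in> {y\<in>Q. (x2,y)\<in>E}" "y2 \<noteq> y1" using exists_ne1[OF c2] by blast
    have "(x1,y1) \<in> edges_between E T Q" "(x2,y2) \<in> edges_between E T Q" "vdisjoint (x1,y1) (x2,y2)"
      using x1 x2 y1 y2 assms(2) by (auto simp: eb_iff vdisj_iff)
    then show ?thesis by blast
  next
    case 3
    obtain x1 where x1: "x1 \<in> S" using card_pos_ex[OF cS(1)] card_pos_ex[OF cS(2)] by blast
    have "card {y\<in>P. (x1,y)\<in>E} \<ge> 1" using 3 x1 unfolding dout_def by blast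
    then obtain y1 where y1: "y1 \<in> P" "(x1,y1)\<in>E" using card_pos_ex by blast
    obtain y where y: "y \<in> T" "y \<noteq> y1" using exists_ne1[OF assms(8)] by blast
    have "card {z\<in>Q. (y,z)\<in>E} \<ge> 1" using 3 y unfolding dout_def by blast
    then obtain z where z: "z \<in> Q" "(y,z)\<in>E" using card_pos_ex by blast
    show ?thesis
    proof (cases "z = x1")
      case False
      have "x1 \<noteq> y" using x1 y assms(4) by blast
      moreover have "y1 \<noteq> z" using y1 z assms(3) by blast
      ultimately have "(x1,y1) \<in> edges_between E S P" "(y,z) \<in> edges_between E T Q" "vdisjoint (x1,y1) (y,z)"
        using x1 y1 y z False by (auto simp: eb_iff vdisj_iff)
      then show ?thesis by blast
    next
      case True
      obtain x2 where x2: "x2 \<in> S" "x2 \<noteq> x1" using exists_ne1[OF assms(7)] by blast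
      have "card {y\<in>P. (x2,y)\<in>E} \<ge> 1" using 3 x2 unfolding dout_def by blast
      then obtain y2 where y2: "y2 \<in> P" "(x2,y2)\<in>E" using card_pos_ex by blast
      show ?thesis
      proof (cases "y2 = y1")
        case False
        have "(x1,y1) \<in> edges_between E S P" "(x2,y2) \<in> edges_between E S P" "vdisjoint (x1,y1) (x2,y2)"
          using x1 y1 x2 y2 False assms(1) by (auto simp: eb_iff vdisj_iff)
        then show ?thesis by blast
      next
        case yy: True
        have "x2 \<noteq> y" using x2 y assms(4) by blast
        moreover have "y1 \<noteq> x1" using y1 x1 assms(1) by blast
        ultimately have "(x2,y1) \<in> edges_between E S P" "(y,x1) \<in> edges_between E T Q" "vdisjoint (x2,y1) (y,x1)"
          using x1 y1 x2 y2 yy True y z by (auto simp: eb_iff vdisj_iff)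
        then show ?thesis by blast
      qed
    qed
  qed
qed


lemma gt1: "1 < real (d::nat) \<Longrightarrow> 2 \<le> d" by simp
lemma gt0: "0 < real (d::nat) \<Longrightarrow> 1 \<le> d" by simp
lemma deg_bound:
  fixes dV d1 d2 d3 d4 s :: nat
  assumes "m \<le> real dV" "dV \<le> d1 + d2 + d3 + d4" "d1 + 1 \<le> s"
  shows "real d2 \<ge> m - real s + 1 - real d3 - real d4"
proof -
  have "real dV \<le> real d1 + real d2 + real d3 + real d4" using assms(2) by (metis of_nat_add of_nat_le_iff)
  moreover have "real d1 + 1 \<le> real s" using assms(3) by (metis of_nat_1 of_nat_add of_nat_le_iff)
  ultimately show ?thesis using assms(1) by linarith
qed
lemma fl: "real_of_int \<lfloor>x\<rfloor> > x - 1" using floor_correct[of x] by linarith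

lemma ex_out: "1 \<le> dout E Y x \<Longrightarrow> \<exists>y\<in>Y. (x,y)\<in>E"
  unfolding dout_def using card_pos_ex by fastforce
lemma ex_in: "1 \<le> din E Y x \<Longrightarrow> \<exists>y\<in>Y. (y,x)\<in>E"
  unfolding din_def using card_pos_ex by fastforce

lemma card_diff2:
  assumes "finite S" "P \<subseteq> S" "Q \<subseteq> S"
  shows "card S \<le> card (S - P - Q) + card P + card Q"
proof -
  have "S \<subseteq> (S - P - Q) \<union> P \<union> Q" by blast
  then have "card S \<le> card ((S - P - Q) \<union> P \<union> Q)" using assms by (intro card_mono) (auto intro: finite_subset)
  also have "\<dots> \<le> card ((S - P - Q) \<union> P) + card Q" by (rule card_Un_le)
  also have "\<dots> \<le> card (S - P - Q) + card P + card Q" using card_Un_le[of "S - P - Q" P] by linarith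
  finally show ?thesis .
qed

lemma fewA:
  assumes "finite X" "finite Y" "card Y \<le> 1" "\<forall>y\<in>Y. real (din E X y) \<le> c" "0 \<le> c"
  shows "real (card {x\<in>X. 1 \<le> dout E Y x}) \<le> c"
proof -
  have "card {x\<in>X. 1 \<le> dout E Y x} * 1 \<le> (\<Sum>x\<in>X. dout E Y x)" by (rule markov[OF assms(1)])
  also have "\<dots> = (\<Sum>y\<in>Y. din E X y)" using double_count[OF assms(1,2)] by simp
  finally have "real (card {x\<in>X. 1 \<le> dout E Y x}) \<le> real (\<Sum>y\<in>Y. din E X y)" by (metis mult_1_right of_nat_le_iff)
  also have "\<dots> \<le> real (card Y) * c" by (rule sum_le_real[OF assms(2,4)])
  also have "\<dots> \<le> 1 * c" using assms(3,5) by (intro mult_right_mono) auto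
  finally show ?thesis by simp
qed

lemma fewB:
  assumes "finite X" "finite Y" "card Y \<le> 1" "\<forall>y\<in>Y. real (dout E X y) \<le> c" "0 \<le> c"
  shows "real (card {x\<in>X. 1 \<le> din E Y x}) \<le> c"
proof -
  have "card {x\<in>X. 1 \<le> din E Y x} * 1 \<le> (\<Sum>x\<in>X. din E Y x)" by (rule markov[OF assms(1)])
  also have "\<dots> = (\<Sum>y\<in>Y. dout E X y)" using double_count[OF assms(2,1)] by simp
  finally have "real (card {x\<in>X. 1 \<le> din E Y x}) \<le> real (\<Sum>y\<in>Y. dout E X y)" by (metis mult_1_right of_nat_le_iff)
  also have "\<dots> \<le> real (card Y) * c" by (rule sum_le_real[OF assms(2,4)])
  also have "\<dots> \<le> 1 * c" using assms(3,5) by (intro mult_right_mono) auto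
  finally show ?thesis by simp
qed


lemma gt1': "real (k::nat) > real m - 1 \<Longrightarrow> k \<ge> m" by simp
lemma gt1'': "real (k::nat) \<ge> real (m::nat) \<Longrightarrow> k \<ge> m" by simp

lemma vdisj_sym: "vdisjoint e1 e2 \<Longrightarrow> vdisjoint e2 e1"
  unfolding vdisjoint_def by blast

lemma combine:
  assumes "\<exists>e1\<in>edges_between E S T. \<exists>e2\<in>edges_between E S T. vdisjoint e1 e2"
    "\<exists>e1\<in>edges_between E T S. \<exists>e2\<in>edges_between E T S. vdisjoint e1 e2"
    "\<exists>e1\<in>edges_between E S T. \<exists>e2\<in>edges_between E T S. vdisjoint e1 e2"
  shows "\<forall>X1 Y1 X2 Y2. (X1, Y1) \<in> {(S, T), (T, S)} \<and> (X2, Y2) \<in> {(S, T), (T, S)} \<longrightarrow>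
            (\<exists>e1 \<in> edges_between E X1 Y1. \<exists>e2 \<in> edges_between E X2 Y2. vdisjoint e1 e2)"
proof -
  have 4: "\<exists>e1\<in>edges_between E T S. \<exists>e2\<in>edges_between E S T. vdisjoint e1 e2"
    using assms(3) vdisj_sym by blast
  show ?thesis using assms 4 by auto
qed

lemma core:
  fixes V :: "'a set" and eta2 eps3 :: real
  assumes G: "digraph V E" and nN: "card V \<ge> 1000"
    and md: "real (card V) / 2 \<le> real (min_semideg E V)"
    and ST: "ST_conditions eps3 eta2 V E A B S T"
    and e2: "0 < eta2" "eta2 \<le> 1/100" and e3: "0 < eps3" "eps3 \<le> 1/100"
  shows "((card A = card B \<and> card A \<le> 1 \<longrightarrow>
         (\<forall>X1 Y1 X2 Y2. (X1, Y1) \<in> {(S, T), (T, S)} \<and> (X2, Y2) \<in> {(S, T), (T, S)} \<longrightarrow>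
            (\<exists>e1 \<in> edges_between E X1 Y1. \<exists>e2 \<in> edges_between E X2 Y2. vdisjoint e1 e2))) \<and>
       (A = {} \<longrightarrow> (\<exists>e1 \<in> edges_between E T S. \<exists>e2 \<in> edges_between E T S. vdisjoint e1 e2)) \<and>
       (card A = 1 \<and> card B \<ge> 2 \<longrightarrow>
          (\<exists>e1 \<in> edges_between E T S. \<exists>e2 \<in> edges_between E T S. vdisjoint e1 e2)) \<and>
       (\<exists>e1 \<in> edges_between E S (T \<union> A) \<union> edges_between E T (S \<union> B).
        \<exists>e2 \<in> edges_between E S (T \<union> A) \<union> edges_between E T (S \<union> B). vdisjoint e1 e2))"
proof -
  define n where "n = real (card V)"
  define a where "a = card A"
  define b where "b = card B"
  define s where "s = card S"
  define t where "t = card T"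
  note st = ST[unfolded ST_conditions_def Let_def n_def[symmetric]]
  have U: "A \<union> B \<union> S \<union> T = V" using st by blast
  have D: "A \<inter> B = {}" "A \<inter> S = {}" "A \<inter> T = {}" "B \<inter> S = {}" "B \<inter> T = {}" "S \<inter> T = {}"
    using st by blast+
  have ab: "a \<le> b" "s \<le> t" using st unfolding a_def b_def s_def t_def by blast+
  have sl: "real_of_int \<lfloor>n/2\<rfloor> - eps3*n \<le> real s" using st unfolding s_def by blast
  have abn: "real (a + b) \<le> eps3*n" using st unfolding a_def b_def by blast
  have Ap: "\<forall>x\<in>A. real (din E S x) \<le> 3*eta2*n \<and> real (dout E T x) \<le> 3*eta2*n" using st by blast
  have Bp: "\<forall>x\<in>B. real (dout E S x) \<le> 3*eta2*n \<and> real (din E T x) \<le> 3*eta2*n" using st by blast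
  have fV: "finite V" and loop: "\<And>x. (x,x) \<notin> E" using G unfolding digraph_def by auto
  have fA: "finite A" and fB: "finite B" and fS: "finite S" and fT: "finite T"
    using fV U by (auto intro: finite_subset)
  have "card (A \<union> B) = a + b" unfolding a_def b_def using fA fB D by (simp add: card_Un_disjoint)
  moreover have "card (A \<union> B \<union> S) = card (A \<union> B) + s" unfolding s_def using fA fB fS D
    by (intro card_Un_disjoint) auto
  moreover have "card (A \<union> B \<union> S \<union> T) = card (A \<union> B \<union> S) + t" unfolding t_def using fA fB fS fT D
    by (intro card_Un_disjoint) auto
  ultimately have nsum: "card V = a + b + s + t" using U by simp
  then have nr: "n = real a + real b + real s + real t" unfolding n_def by simp
  have n1000: "n \<ge> 1000" using nN unfolding n_def by simp
  have e3n: "eps3*n \<le> n/100" using mult_right_mono[OF e3(2), of n] n1000 by simp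
  have sbig: "real s \<ge> 49/100 * n - 1" using sl fl[of "n/2"] e3n by linarith
  have abs: "real a + real b \<le> n/100" using abn e3n by simp
  have en: "eta2 * n \<le> n/100" using mult_right_mono[OF e2(2), of n] n1000 by simp
  have en0: "0 \<le> eta2 * n" using e2 n1000 by simp
  have tbig: "real t \<ge> real s" using ab by simp
  have dV: "\<And>x. x \<in> V \<Longrightarrow> n/2 \<le> real (dout E V x) \<and> n/2 \<le> real (din E V x)"
    using deg_V[OF G md] unfolding n_def by blast
  have splitO: "dout E V x \<le> dout E S x + dout E T x + dout E A x + dout E B x" for x
  proof -
    have "dout E V x \<le> dout E S x + dout E (T \<union> (A \<union> B)) x" using U fS fT fA fB by (intro dout_split) auto
    moreover have "dout E (T \<union> (A \<union> B)) x \<le> dout E T x + dout E (A \<union> B) x" using fT fA fB by (intro dout_split) auto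
    moreover have "dout E (A \<union> B) x \<le> dout E A x + dout E B x" using fA fB by (intro dout_split) auto
    ultimately show ?thesis by linarith
  qed
  have splitI: "din E V x \<le> din E S x + din E T x + din E A x + din E B x" for x
  proof -
    have "din E V x \<le> din E S x + din E (T \<union> (A \<union> B)) x" using U fS fT fA fB by (intro din_split) auto
    moreover have "din E (T \<union> (A \<union> B)) x \<le> din E T x + din E (A \<union> B) x" using fT fA fB by (intro din_split) auto
    moreover have "din E (A \<union> B) x \<le> din E A x + din E B x" using fA fB by (intro din_split) auto
    ultimately show ?thesis by linarith
  qed
  have splitO2: "dout E V x \<le> dout E T x + dout E S x + dout E A x + dout E B x" for x
    using splitO[of x] by linarith
  have splitI2: "din E V x \<le> din E T x + din E S x + din E A x + din E B x" for x
    using splitI[of x] by linarith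
  have xV: "\<And>x. x \<in> S \<Longrightarrow> x \<in> V" "\<And>x. x \<in> T \<Longrightarrow> x \<in> V" using U by auto
  have So: "real (dout E T x) \<ge> n/2 - real s + 1 - real (dout E A x) - real (dout E B x)" if "x \<in> S" for x
    by (rule deg_bound[OF conjunct1[OF dV[OF xV(1)[OF that]]] splitO dout_self[OF fS that loop, folded s_def]])
  have Si: "real (din E T x) \<ge> n/2 - real s + 1 - real (din E A x) - real (din E B x)" if "x \<in> S" for x
    by (rule deg_bound[OF conjunct2[OF dV[OF xV(1)[OF that]]] splitI din_self[OF fS that loop, folded s_def]])
  have To: "real (dout E S x) \<ge> n/2 - real t + 1 - real (dout E A x) - real (dout E B x)" if "x \<in> T" for x
    by (rule deg_bound[OF conjunct1[OF dV[OF xV(2)[OF that]]] splitO2 dout_self[OF fT that loop, folded t_def]])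
  have Ti: "real (din E S x) \<ge> n/2 - real t + 1 - real (din E A x) - real (din E B x)" if "x \<in> T" for x
    by (rule deg_bound[OF conjunct2[OF dV[OF xV(2)[OF that]]] splitI2 din_self[OF fT that loop, folded t_def]])
  have leA: "real (dout E A x) \<le> real a" "real (din E A x) \<le> real a" for x
    using dout_le[OF fA] din_le[OF fA] unfolding a_def by auto
  have leB: "real (dout E B x) \<le> real b" "real (din E B x) \<le> real b" for x
    using dout_le[OF fB] din_le[OF fB] unfolding b_def by auto
  have SS2: "card S \<ge> 3" "card T \<ge> 3" using sbig tbig n1000 unfolding s_def t_def by linarith+
  have P4: "\<exists>e1 \<in> edges_between E S (T \<union> A) \<union> edges_between E T (S \<union> B).
        \<exists>e2 \<in> edges_between E S (T \<union> A) \<union> edges_between E T (S \<union> B). vdisjoint e1 e2"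
  proof -
    have sp3S: "dout E V x \<le> dout E S x + dout E (T \<union> A) x + dout E B x + 0" for x
    proof -
      have "dout E V x \<le> dout E S x + dout E ((T \<union> A) \<union> B) x" using U fS fT fA fB by (intro dout_split) auto
      moreover have "dout E ((T \<union> A) \<union> B) x \<le> dout E (T \<union> A) x + dout E B x" using fT fA fB by (intro dout_split) auto
      ultimately show ?thesis by linarith
    qed
    have sp3T: "dout E V x \<le> dout E T x + dout E (S \<union> B) x + dout E A x + 0" for x
    proof -
      have "dout E V x \<le> dout E T x + dout E ((S \<union> B) \<union> A) x" using U fS fT fA fB by (intro dout_split) auto
      moreover have "dout E ((S \<union> B) \<union> A) x \<le> dout E (S \<union> B) x + dout E A x" using fS fA fB by (intro dout_split) auto
      ultimately show ?thesis by linarith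
    qed
    have pS: "real (dout E (T \<union> A) x) \<ge> n/2 - real s + 1 - real b" if "x \<in> S" for x
    proof -
      have "real (dout E (T \<union> A) x) \<ge> n/2 - real s + 1 - real (dout E B x) - real (0::nat)"
        by (rule deg_bound[OF conjunct1[OF dV[OF xV(1)[OF that]]] sp3S dout_self[OF fS that loop, folded s_def]])
      then show ?thesis using leB(1)[of x] by simp
    qed
    have pT: "real (dout E (S \<union> B) x) \<ge> n/2 - real t + 1 - real a" if "x \<in> T" for x
    proof -
      have "real (dout E (S \<union> B) x) \<ge> n/2 - real t + 1 - real (dout E A x) - real (0::nat)"
        by (rule deg_bound[OF conjunct1[OF dV[OF xV(2)[OF that]]] sp3T dout_self[OF fT that loop, folded t_def]])
      then show ?thesis using leA(1)[of x] by simp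
    qed
    have c: "(\<forall>x\<in>S. dout E (T \<union> A) x \<ge> 2) \<or> (\<forall>y\<in>T. dout E (S \<union> B) y \<ge> 2) \<or>
      ((\<forall>x\<in>S. dout E (T \<union> A) x \<ge> 1) \<and> (\<forall>y\<in>T. dout E (S \<union> B) y \<ge> 1))"
    proof (cases "2 * real s + 2 * real b < n")
      case True
      then have "\<forall>x\<in>S. dout E (T \<union> A) x \<ge> 2" using pS by (intro ballI gt1) (fastforce)
      then show ?thesis by blast
    next
      case F1: False
      show ?thesis
      proof (cases "2 * real t + 2 * real a < n")
        case True
        then have "\<forall>y\<in>T. dout E (S \<union> B) y \<ge> 2" using pT by (intro ballI gt1) (fastforce)
        then show ?thesis by blast
      next
        case False
        have eq: "2*real s + 2*real b = n" "2*real t + 2*real a = n" using F1 False nr by linarith+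
        have "\<forall>x\<in>S. dout E (T \<union> A) x \<ge> 1"
        proof
          fix x assume "x \<in> S"
          then have "real (dout E (T \<union> A) x) \<ge> 1" using pS[of x] eq by linarith
          then show "dout E (T \<union> A) x \<ge> 1" by simp
        qed
        moreover have "\<forall>y\<in>T. dout E (S \<union> B) y \<ge> 1"
        proof
          fix x assume "x \<in> T"
          then have "real (dout E (S \<union> B) x) \<ge> 1" using pT[of x] eq by linarith
          then show "dout E (S \<union> B) x \<ge> 1" by simp
        qed
        ultimately show ?thesis by blast
      qed
    qed
    show ?thesis
      by (rule part4_lem[OF _ _ _ D(6) _ _ _ _ c]) (use D SS2 in auto)
  qed
  have P1: "a = b \<and> a \<le> 1 \<longrightarrow>
         (\<forall>X1 Y1 X2 Y2. (X1, Y1) \<in> {(S, T), (T, S)} \<and> (X2, Y2) \<in> {(S, T), (T, S)} \<longrightarrow>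
            (\<exists>e1 \<in> edges_between E X1 Y1. \<exists>e2 \<in> edges_between E X2 Y2. vdisjoint e1 e2))"
  proof (intro impI)
    assume h: "a = b \<and> a \<le> 1"
    have c3: "0 \<le> 3*eta2*n" using en0 by simp
    define Sout where "Sout = {x\<in>S. 1 \<le> dout E A x}"
    define Sin where "Sin = {x\<in>S. 1 \<le> din E B x}"
    define Tout where "Tout = {x\<in>T. 1 \<le> dout E B x}"
    define Tin where "Tin = {x\<in>T. 1 \<le> din E A x}"
    have cSo: "real (card Sout) \<le> 3*eta2*n" unfolding Sout_def
      by (rule fewA[OF fS fA _ _ c3]) (use h Ap a_def in auto)
    have cSi: "real (card Sin) \<le> 3*eta2*n" unfolding Sin_def
      by (rule fewB[OF fS fB _ _ c3]) (use h Bp b_def in auto)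
    have cTo: "real (card Tout) \<le> 3*eta2*n" unfolding Tout_def
      by (rule fewA[OF fT fB _ _ c3]) (use h Bp b_def in auto)
    have cTi: "real (card Tin) \<le> 3*eta2*n" unfolding Tin_def
      by (rule fewB[OF fT fA _ _ c3]) (use h Ap a_def in auto)
    define Sg where "Sg = S - Sout - Sin"
    define Tg where "Tg = T - Tout - Tin"
    have "card S \<le> card Sg + card Sout + card Sin" unfolding Sg_def
      by (rule card_diff2[OF fS]) (auto simp: Sout_def Sin_def)
    then have "real (card S) \<le> real (card Sg + card Sout + card Sin)" by (simp only: of_nat_le_iff)
    then have "real s \<le> real (card Sg) + real (card Sout) + real (card Sin)" unfolding s_def by simp
    then have cSg: "card Sg \<ge> 3" using cSo cSi sbig en n1000 by (intro gt1') linarith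
    have "card T \<le> card Tg + card Tout + card Tin" unfolding Tg_def
      by (rule card_diff2[OF fT]) (auto simp: Tout_def Tin_def)
    then have "real (card T) \<le> real (card Tg + card Tout + card Tin)" by (simp only: of_nat_le_iff)
    then have "real t \<le> real (card Tg) + real (card Tout) + real (card Tin)" unfolding t_def by simp
    then have cTg: "card Tg \<ge> 3" using cTo cTi sbig tbig en n1000 by (intro gt1') linarith
    have SgS: "Sg \<subseteq> S" and TgT: "Tg \<subseteq> T" unfolding Sg_def Tg_def by auto
    have Sg0: "dout E A x = 0" "din E B x = 0" if "x \<in> Sg" for x
      using that unfolding Sg_def Sout_def Sin_def by auto
    have Tg0: "dout E B x = 0" "din E A x = 0" if "x \<in> Tg" for x
      using that unfolding Tg_def Tout_def Tin_def by auto
    have SgO: "real (dout E T x) \<ge> n/2 - real s + 1 - real a" if "x \<in> Sg" for x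
    proof -
      have "x \<in> S" using that SgS by auto
      then show ?thesis using So[of x] Sg0[OF that] leB(1)[of x] h by simp
    qed
    have SgI: "real (din E T x) \<ge> n/2 - real s + 1 - real a" if "x \<in> Sg" for x
    proof -
      have "x \<in> S" using that SgS by auto
      then show ?thesis using Si[of x] Sg0[OF that] leA(2)[of x] h by simp
    qed
    have TgO: "real (dout E S x) \<ge> n/2 - real t + 1 - real a" if "x \<in> Tg" for x
    proof -
      have "x \<in> T" using that TgT by auto
      then show ?thesis using To[of x] Tg0[OF that] leA(1)[of x] h by simp
    qed
    have TgI: "real (din E S x) \<ge> n/2 - real t + 1 - real a" if "x \<in> Tg" for x
    proof -
      have "x \<in> T" using that TgT by auto
      then show ?thesis using Ti[of x] Tg0[OF that] leB(2)[of x] h by simp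
    qed
    have c2: "card Sg \<ge> 2" using cSg by simp
    have c1: "card Sg \<ge> 1" using cSg by simp
    obtain x1 where "x1 \<in> Sg" using card_pos_ex[OF c1] by blast
    moreover obtain x2 where "x2 \<in> Sg" "x2 \<noteq> x1" using exists_ne1[OF c2] by blast
    ultimately have x12: "x1 \<in> Sg" "x2 \<in> Sg" "x1 \<noteq> x2" by auto
    show "\<forall>X1 Y1 X2 Y2. (X1, Y1) \<in> {(S, T), (T, S)} \<and> (X2, Y2) \<in> {(S, T), (T, S)} \<longrightarrow>
            (\<exists>e1 \<in> edges_between E X1 Y1. \<exists>e2 \<in> edges_between E X2 Y2. vdisjoint e1 e2)"
    proof (cases "2 * real s + 2 * real a < n")
      case True
      have o2: "dout E T x \<ge> 2" and i2: "din E T x \<ge> 2" if "x \<in> Sg" for x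
      proof -
        show "dout E T x \<ge> 2" using SgO[OF that] True by (intro gt1) linarith
        show "din E T x \<ge> 2" using SgI[OF that] True by (intro gt1) linarith
      qed
      obtain y1 where y1: "y1 \<in> T" "(x1,y1) \<in> E" using ex_out[of E T x1] o2[OF x12(1)] by auto
      obtain w where w: "w \<in> T" "(w,x1) \<in> E" using ex_in[of E T x1] i2[OF x12(1)] by auto
      have PST: "\<exists>e1\<in>edges_between E S T. \<exists>e2\<in>edges_between E S T. vdisjoint e1 e2"
        by (rule outL[OF D(6) _ _ x12(3) y1(2) y1(1)]) (use x12 SgS o2[OF x12(2)] in \<open>auto simp: dout_def\<close>)
      have PTS: "\<exists>e1\<in>edges_between E T S. \<exists>e2\<in>edges_between E T S. vdisjoint e1 e2"
        by (rule inL[OF _ _ _ x12(3) w(2) w(1)]) (use D x12 SgS i2[OF x12(2)] in \<open>auto simp: din_def\<close>)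
      have PM: "\<exists>e1\<in>edges_between E S T. \<exists>e2\<in>edges_between E T S. vdisjoint e1 e2"
        by (rule M1[OF D(6) _ _ x12(3) y1(2) y1(1)]) (use x12 SgS i2[OF x12(2)] in \<open>auto simp: din_def\<close>)
      show ?thesis by (rule combine[OF PST PTS PM])
    next
      case False
      have ts: "real t = real s" "n = 2 * real s + 2 * real a" using False nr ab h by auto
      have oS: "\<forall>x\<in>Sg. \<exists>y\<in>T. (x,y) \<in> E" by (intro ballI ex_out gt0, drule SgO) (use ts in linarith)
      have iS: "\<forall>x\<in>Sg. \<exists>y\<in>T. (y,x) \<in> E" by (intro ballI ex_in gt0, drule SgI) (use ts in linarith)
      have oT: "\<forall>x\<in>Tg. \<exists>y\<in>S. (x,y) \<in> E" by (intro ballI ex_out gt0, drule TgO) (use ts in linarith)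
      have iT: "\<forall>x\<in>Tg. \<exists>y\<in>S. (y,x) \<in> E" by (intro ballI ex_in gt0, drule TgI) (use ts in linarith)
      have PST: "\<exists>e1\<in>edges_between E S T. \<exists>e2\<in>edges_between E S T. vdisjoint e1 e2"
        by (rule bip[OF D(6) SgS TgT _ _ oS iT]) (use cSg cTg in auto)
      have PTS: "\<exists>e1\<in>edges_between E T S. \<exists>e2\<in>edges_between E T S. vdisjoint e1 e2"
        by (rule bip[OF _ TgT SgS _ _ oT iS]) (use D cSg cTg in auto)
      have PM: "\<exists>e1\<in>edges_between E S T. \<exists>e2\<in>edges_between E T S. vdisjoint e1 e2"
        by (rule M2[OF D(6) SgS TgT _ _ oS oT]) (use cSg cTg in auto)
      show ?thesis by (rule combine[OF PST PTS PM])
    qed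
  qed
  have P23: "a \<le> 1 \<and> 2 * a \<le> b \<and> a < b \<longrightarrow>
     (\<exists>e1 \<in> edges_between E T S. \<exists>e2 \<in> edges_between E T S. vdisjoint e1 e2)"
  proof (intro impI)
    assume h: "a \<le> 1 \<and> 2 * a \<le> b \<and> a < b"
    define Bad where "Bad = {x\<in>S. b - a \<le> 2 * din E B x}"
    have "card Bad * (b - a) \<le> (\<Sum>x\<in>S. 2 * din E B x)" unfolding Bad_def by (rule markov[OF fS])
    also have "\<dots> = 2 * (\<Sum>x\<in>S. din E B x)" by (simp add: sum_distrib_left)
    also have "\<dots> = 2 * (\<Sum>y\<in>B. dout E S y)" using double_count[OF fB fS] by simp
    finally have "real (card Bad * (b - a)) \<le> real (2 * (\<Sum>y\<in>B. dout E S y))" by (simp only: of_nat_le_iff)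
    moreover have "real (\<Sum>y\<in>B. dout E S y) \<le> real (card B) * (3*eta2*n)"
      by (rule sum_le_real[OF fB]) (use Bp in auto)
    ultimately have "real (card Bad) * real (b - a) \<le> 2 * (real b * (3*eta2*n))" unfolding b_def
      by (simp only: of_nat_mult of_nat_numeral)
    moreover have "real b \<le> 2 * real (b - a)" using h by (simp add: of_nat_diff)
    then have "real b * (3*eta2*n) \<le> (2 * real (b - a)) * (3*eta2*n)" using en0 by (intro mult_right_mono) auto
    ultimately have "real (card Bad) * real (b - a) \<le> 2 * ((2 * real (b - a)) * (3*eta2*n))" by linarith
    then have "real (card Bad) * real (b - a) \<le> (12*eta2*n) * real (b - a)" by (simp add: algebra_simps)
    then have cB: "real (card Bad) \<le> 12*eta2*n" by (rule mult_right_le_imp_le) (use h in auto)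
    define Sg where "Sg = S - Bad"
    have "card S \<le> card (S - Bad - {}) + card Bad + card ({}::'a set)"
      by (rule card_diff2[OF fS]) (auto simp: Bad_def)
    then have "card S \<le> card Sg + card Bad" unfolding Sg_def by simp
    then have "real (card S) \<le> real (card Sg + card Bad)" by (simp only: of_nat_le_iff)
    then have "real s \<le> real (card Sg) + real (card Bad)" unfolding s_def by simp
    then have cSg: "card Sg \<ge> 2" using cB sbig en n1000 by (intro gt1') linarith
    have SgS: "Sg \<subseteq> S" unfolding Sg_def by auto
    have i2: "din E T x \<ge> 2" if "x \<in> Sg" for x
    proof -
      have "\<not> (b - a \<le> 2 * din E B x)" using that unfolding Sg_def Bad_def by auto
      then have "2 * din E B x + a < b" using h by linarith
      then have "real (2 * din E B x + a) < real b" by (simp only: of_nat_less_iff)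
      then have "2 * real (din E B x) + real a < real b" by simp
      moreover have "2 * real s \<le> n - real a - real b" using nr tbig by linarith
      moreover have "x \<in> S" using that SgS by auto
      ultimately have "real (din E T x) > 1" using Si[of x] leA(2)[of x] by linarith
      then show ?thesis by (rule gt1)
    qed
    have c1: "card Sg \<ge> 1" using cSg by simp
    obtain v1 where "v1 \<in> Sg" using card_pos_ex[OF c1] by blast
    moreover obtain v2 where "v2 \<in> Sg" "v2 \<noteq> v1" using exists_ne1[OF cSg] by blast
    ultimately have v12: "v1 \<in> Sg" "v2 \<in> Sg" "v1 \<noteq> v2" by auto
    obtain w where w: "w \<in> T" "(w,v1) \<in> E" using ex_in[of E T v1] i2[OF v12(1)] by auto
    show "\<exists>e1\<in>edges_between E T S. \<exists>e2\<in>edges_between E T S. vdisjoint e1 e2"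
      by (rule inL[OF _ _ _ v12(3) w(2) w(1)]) (use D v12 SgS i2[OF v12(2)] in \<open>auto simp: din_def\<close>)
  qed
  show ?thesis
  proof (intro conjI impI)
    assume "card A = card B \<and> card A \<le> 1"
    then show "\<forall>X1 Y1 X2 Y2. (X1, Y1) \<in> {(S, T), (T, S)} \<and> (X2, Y2) \<in> {(S, T), (T, S)} \<longrightarrow>
            (\<exists>e1 \<in> edges_between E X1 Y1. \<exists>e2 \<in> edges_between E X2 Y2. vdisjoint e1 e2)"
      using P1 unfolding a_def b_def by blast
  next
    assume A0: "A = {}"
    then have a0: "a = 0" unfolding a_def by simp
    show "\<exists>e1 \<in> edges_between E T S. \<exists>e2 \<in> edges_between E T S. vdisjoint e1 e2"
    proof (cases "b = 0")
      case True
      then show ?thesis using P1 a0 by auto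
    next
      case False
      then show ?thesis using P23 a0 by auto
    qed
  next
    assume "card A = 1 \<and> card B \<ge> 2"
    then show "\<exists>e1 \<in> edges_between E T S. \<exists>e2 \<in> edges_between E T S. vdisjoint e1 e2"
      using P23 unfolding a_def b_def by auto
  next
    show "\<exists>e1 \<in> edges_between E S (T \<union> A) \<union> edges_between E T (S \<union> B).
        \<exists>e2 \<in> edges_between E S (T \<union> A) \<union> edges_between E T (S \<union> B). vdisjoint e1 e2"
      by (rule P4)
  qed
qed

theorem proposition5p3:
  "\<exists>eta0 > (0::real). \<forall>eta2. 0 < eta2 \<and> eta2 \<le> eta0 \<longrightarrow>
   (\<exists>eps4_0 > (0::real). \<forall>eps4. 0 < eps4 \<and> eps4 \<le> eps4_0 \<longrightarrow>
   (\<exists>eps3_0 > (0::real). \<forall>eps3. 0 < eps3 \<and> eps3 \<le> eps3_0 \<longrightarrow>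
   (\<exists>N::nat. \<forall>(V::'a set) E A B S T.
      digraph V E \<and> card V \<ge> N \<and> min_semideg E V \<ge> card V / 2 \<and>
      ST_conditions eps3 eta2 V E A B S T \<longrightarrow>
      ((card A = card B \<and> card A \<le> 1 \<longrightarrow>
         (\<forall>X1 Y1 X2 Y2. (X1, Y1) \<in> {(S, T), (T, S)} \<and> (X2, Y2) \<in> {(S, T), (T, S)} \<longrightarrow>
            (\<exists>e1 \<in> edges_between E X1 Y1. \<exists>e2 \<in> edges_between E X2 Y2. vdisjoint e1 e2))) \<and>
       (A = {} \<longrightarrow> (\<exists>e1 \<in> edges_between E T S. \<exists>e2 \<in> edges_between E T S. vdisjoint e1 e2)) \<and>
       (card A = 1 \<and> card B \<ge> 2 \<longrightarrow>
          (\<exists>e1 \<in> edges_between E T S. \<exists>e2 \<in> edges_between E T S. vdisjoint e1 e2)) \<and>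
       (\<exists>e1 \<in> edges_between E S (T \<union> A) \<union> edges_between E T (S \<union> B).
        \<exists>e2 \<in> edges_between E S (T \<union> A) \<union> edges_between E T (S \<union> B). vdisjoint e1 e2)))))"
  apply (rule exI[where x="1/100"])
  apply (intro conjI allI impI)
   apply simp
  apply (rule exI[where x=1], intro conjI allI impI, simp)
  apply (rule exI[where x="1/100"], intro conjI allI impI, simp)
  apply (rule exI[where x=1000], intro allI impI)
  apply (elim conjE)
  apply (rule core)
         apply assumption+
  done

end
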